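(* For every set $X\subseteq\omega$ there exists an infinite $X$-computable tournament $T$ on $\omega$ such that every infinite $T$-transitive subtournament $U$ satisfies $U\subseteq^{*}X$ or $U\subseteq^{*}\overline{X}$.
   Context: A tournament $T$ on a domain $D\subseteq\mathbb N$ is an irreflexive binary relation on $D$ such that for all distinct $x,y\in D$ exactly one of $T(x,y)$, $T(y,x)$ holds. A set $U\subseteq D$ is $T$-transitive (a transitive subtournament) if $T$ restricted to $U$ is transitive. $A\subseteq^* B$ means all but finitely many elements of $A$ lie in $B$. *)

theory Defs
  imports Main
begin

text \<open>Relative computability: the total mu-recursive functions relative to a
set X given as an extra basic function (Kleene's characterisation).  A function of arity n is modelled as a
HOL function on argument lists; only its values on lists of length n matter.\<close>

primrec prec :: "(nat list \<Rightarrow> nat) \<Rightarrow> (nat list \<Rightarrow> nat) \<Rightarrow> nat \<Rightarrow> nat list \<Rightarrow> nat" where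
  "prec g h 0 ys = g ys"
| "prec g h (Suc k) ys = h (k # prec g h k ys # ys)"

inductive recfn :: "nat set \<Rightarrow> nat \<Rightarrow> (nat list \<Rightarrow> nat) \<Rightarrow> bool" for X :: "nat set" where
  zero: "recfn X n (\<lambda>xs. 0)"
| succ: "recfn X 1 (\<lambda>xs. Suc (hd xs))"
| proj: "i < n \<Longrightarrow> recfn X n (\<lambda>xs. xs ! i)"
| orac: "recfn X 1 (\<lambda>xs. if hd xs \<in> X then 1 else 0)"
| comp: "\<lbrakk>recfn X m g; length fs = m; \<forall>i<m. recfn X n (fs ! i)\<rbrakk>
         \<Longrightarrow> recfn X n (\<lambda>xs. g (map (\<lambda>f. f xs) fs))"
| prim_rec: "\<lbrakk>recfn X n g; recfn X (Suc (Suc n)) h\<rbrakk>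
         \<Longrightarrow> recfn X (Suc n) (\<lambda>xs. prec g h (hd xs) (tl xs))"
| mu: "\<lbrakk>recfn X (Suc n) g; \<forall>ys. length ys = n \<longrightarrow> (\<exists>k. g (k # ys) = 0)\<rbrakk>
         \<Longrightarrow> recfn X n (\<lambda>ys. LEAST k. g (k # ys) = 0)"

definition rel_computable_in :: "nat set \<Rightarrow> (nat \<Rightarrow> nat \<Rightarrow> bool) \<Rightarrow> bool" where
  "rel_computable_in X T \<longleftrightarrow>
     (\<exists>f. recfn X 2 f \<and> (\<forall>x y. f [x, y] = (if T x y then 1 else 0)))"

definition tournament_on :: "nat set \<Rightarrow> (nat \<Rightarrow> nat \<Rightarrow> bool) \<Rightarrow> bool" where
  "tournament_on D T \<longleftrightarrow>
     (\<forall>x y. T x y \<longrightarrow> x \<in> D \<and> y \<in> D) \<and>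
     (\<forall>x\<in>D. \<not> T x x) \<and>
     (\<forall>x\<in>D. \<forall>y\<in>D. x \<noteq> y \<longrightarrow> (T x y \<longleftrightarrow> \<not> T y x))"

definition transitive_on :: "(nat \<Rightarrow> nat \<Rightarrow> bool) \<Rightarrow> nat set \<Rightarrow> bool" where
  "transitive_on T U \<longleftrightarrow> (\<forall>x\<in>U. \<forall>y\<in>U. \<forall>z\<in>U. T x y \<and> T y z \<longrightarrow> T x z)"

definition almost_subset :: "'a set \<Rightarrow> 'a set \<Rightarrow> bool" (infix "\<subseteq>\<^sup>*" 50) where
  "A \<subseteq>\<^sup>* B \<longleftrightarrow> finite (A - B)"

end

theory Submission
  imports Defs
begin

definition comp_in :: "nat set \<Rightarrow> nat \<Rightarrow> (nat list \<Rightarrow> nat) \<Rightarrow> bool" where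
  "comp_in X n F \<longleftrightarrow> (\<exists>f. recfn X n f \<and> (\<forall>xs. length xs = n \<longrightarrow> f xs = F xs))"

lemma ci_zero: "comp_in X n (\<lambda>_. 0)"
  unfolding comp_in_def using recfn.zero by blast

lemma ci_succ: "comp_in X 1 (\<lambda>xs. Suc (hd xs))"
  unfolding comp_in_def using recfn.succ by blast

lemma ci_proj: "i < n \<Longrightarrow> comp_in X n (\<lambda>xs. xs ! i)"
  unfolding comp_in_def using recfn.proj by blast

lemma ci_orac: "comp_in X 1 (\<lambda>xs. if hd xs \<in> X then 1 else 0)"
  unfolding comp_in_def using recfn.orac by blast

lemma ci_cong: "comp_in X n F \<Longrightarrow> (\<And>xs. length xs = n \<Longrightarrow> F xs = G xs) \<Longrightarrow> comp_in X n G"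
  unfolding comp_in_def by metis

lemma ci_comp1:
  assumes "comp_in X 1 G" "comp_in X n F1"
  shows "comp_in X n (\<lambda>xs. G [F1 xs])"
proof -
  obtain g where g: "recfn X 1 g" "\<forall>xs. length xs = 1 \<longrightarrow> g xs = G xs"
    using assms(1) unfolding comp_in_def by blast
  obtain f1 where f1: "recfn X n f1" "\<forall>xs. length xs = n \<longrightarrow> f1 xs = F1 xs"
    using assms(2) unfolding comp_in_def by blast
  have "recfn X n (\<lambda>xs. g (map (\<lambda>f. f xs) [f1]))"
    by (rule recfn.comp[OF g(1)]) (use f1 in auto)
  then show ?thesis unfolding comp_in_def using g f1 by (intro exI[of _ "\<lambda>xs. g (map (\<lambda>f. f xs) [f1])"]) auto
qed

lemma ci_comp2:
  assumes "comp_in X 2 G" "comp_in X n F1" "comp_in X n F2"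
  shows "comp_in X n (\<lambda>xs. G [F1 xs, F2 xs])"
proof -
  obtain g where g: "recfn X 2 g" "\<forall>xs. length xs = 2 \<longrightarrow> g xs = G xs"
    using assms(1) unfolding comp_in_def by blast
  obtain f1 where f1: "recfn X n f1" "\<forall>xs. length xs = n \<longrightarrow> f1 xs = F1 xs"
    using assms(2) unfolding comp_in_def by blast
  obtain f2 where f2: "recfn X n f2" "\<forall>xs. length xs = n \<longrightarrow> f2 xs = F2 xs"
    using assms(3) unfolding comp_in_def by blast
  have "recfn X n (\<lambda>xs. g (map (\<lambda>f. f xs) [f1, f2]))"
  proof (rule recfn.comp[OF g(1)])
    show "\<forall>i<2. recfn X n ([f1, f2] ! i)"
      using f1 f2 by (auto simp: less_2_cases_iff)
  qed simp
  then show ?thesis unfolding comp_in_def using g f1 f2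
    by (intro exI[of _ "\<lambda>xs. g (map (\<lambda>f. f xs) [f1, f2])"]) auto
qed

lemma prec_cong:
  assumes "length ys = n" "\<forall>zs. length zs = n \<longrightarrow> g zs = G zs"
    "\<forall>zs. length zs = Suc (Suc n) \<longrightarrow> h zs = H zs"
  shows "prec g h k ys = prec G H k ys"
  using assms by (induction k) auto

lemma ci_prec:
  assumes "comp_in X n G" "comp_in X (Suc (Suc n)) H"
  shows "comp_in X (Suc n) (\<lambda>xs. prec G H (hd xs) (tl xs))"
proof -
  obtain g where g: "recfn X n g" "\<forall>xs. length xs = n \<longrightarrow> g xs = G xs"
    using assms(1) unfolding comp_in_def by blast
  obtain h where h: "recfn X (Suc (Suc n)) h" "\<forall>xs. length xs = Suc (Suc n) \<longrightarrow> h xs = H xs"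
    using assms(2) unfolding comp_in_def by blast
  show ?thesis unfolding comp_in_def
    using recfn.prim_rec[OF g(1) h(1)] prec_cong[OF _ g(2) h(2)]
    by (intro exI[of _ "\<lambda>xs. prec g h (hd xs) (tl xs)"]) auto
qed

lemma prec_pred: "prec (\<lambda>_. 0) (\<lambda>xs. xs ! 0) k ys = k - 1"
  by (cases k) auto

lemma ci_pred: "comp_in X 1 (\<lambda>xs. hd xs - 1)"
proof -
  have "comp_in X (Suc 0) (\<lambda>xs. prec (\<lambda>_. 0) (\<lambda>xs. xs ! 0) (hd xs) (tl xs))"
    by (rule ci_prec[OF ci_zero ci_proj]) simp
  then show ?thesis unfolding numeral_2_eq_2 One_nat_def by (rule ci_cong) (simp_all add: prec_pred)
qed

lemma prec_add: "prec (\<lambda>xs. xs ! 0) (\<lambda>xs. Suc (xs ! Suc 0)) k ys = k + ys ! 0"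
  by (induction k) auto

lemma prec_sub: "prec (\<lambda>xs. xs ! 0) (\<lambda>xs. xs ! Suc 0 - Suc 0) k ys = ys ! 0 - k"
  by (induction k) auto

lemma len2: "length xs = Suc (Suc 0) \<Longrightarrow> \<exists>a b. xs = [a, b]"
  by (cases xs; cases "tl xs") auto

lemma ci_add2: "comp_in X 2 (\<lambda>xs. xs ! 0 + xs ! 1)"
proof -
  have h: "comp_in X (Suc (Suc (Suc 0))) (\<lambda>xs. Suc (hd [xs ! 1]))"
    by (rule ci_comp1[OF ci_succ ci_proj]) simp
  have "comp_in X (Suc (Suc 0)) (\<lambda>xs. prec (\<lambda>xs. xs ! 0) (\<lambda>xs. Suc (hd [xs ! 1])) (hd xs) (tl xs))"
    by (rule ci_prec[OF ci_proj h]) simp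
  then show ?thesis unfolding numeral_2_eq_2 One_nat_def by (rule ci_cong) (auto simp: prec_add numeral_2_eq_2 dest!: len2)
qed

lemma ci_sub2: "comp_in X 2 (\<lambda>xs. xs ! 1 - xs ! 0)"
proof -
  have h: "comp_in X (Suc (Suc (Suc 0))) (\<lambda>xs. hd [xs ! 1] - 1)"
    by (rule ci_comp1[OF ci_pred ci_proj]) simp
  have "comp_in X (Suc (Suc 0)) (\<lambda>xs. prec (\<lambda>xs. xs ! 0) (\<lambda>xs. hd [xs ! 1] - 1) (hd xs) (tl xs))"
    by (rule ci_prec[OF ci_proj h]) simp
  then show ?thesis unfolding numeral_2_eq_2 One_nat_def by (rule ci_cong) (auto simp: prec_sub numeral_2_eq_2 dest!: len2)
qed

lemma ci_plus: "comp_in X n A \<Longrightarrow> comp_in X n B \<Longrightarrow> comp_in X n (\<lambda>xs. A xs + B xs)"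
  using ci_comp2[OF ci_add2] by simp

lemma ci_minus: "comp_in X n A \<Longrightarrow> comp_in X n B \<Longrightarrow> comp_in X n (\<lambda>xs. A xs - B xs)"
  using ci_comp2[OF ci_sub2, of X n B A] by simp

lemma ci_one: "comp_in X n (\<lambda>_. 1)"
  using ci_comp1[OF ci_succ ci_zero] by simp

lemma ci_or: "comp_in X n A \<Longrightarrow> comp_in X n (\<lambda>xs. if A xs \<in> X then 1 else 0)"
  using ci_comp1[OF ci_orac] by simp

lemma inf_big: "infinite (S::nat set) \<Longrightarrow> \<exists>n>m. n \<in> S"
  by (metis finite_atMost finite_subset not_le subsetI atMost_iff)

definition TT :: "nat set \<Rightarrow> nat \<Rightarrow> nat \<Rightarrow> bool" where
  "TT X x y \<longleftrightarrow> x \<noteq> y \<and> ((x \<in> X \<longleftrightarrow> y \<in> X) \<longleftrightarrow> x < y)"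

lemma TT_comp: "rel_computable_in X (TT X)"
proof -
  let ?cx = "\<lambda>xs::nat list. (if xs ! 0 \<in> X then 1 else 0) :: nat"
  let ?cy = "\<lambda>xs::nat list. (if xs ! 1 \<in> X then 1 else 0) :: nat"
  let ?lt = "\<lambda>xs::nat list. 1 - (1 - (xs ! 1 - xs ! 0)) :: nat"
  let ?gt = "\<lambda>xs::nat list. 1 - (1 - (xs ! 0 - xs ! 1)) :: nat"
  let ?ne = "\<lambda>xs. (?cx xs - ?cy xs) + (?cy xs - ?cx xs)"
  let ?F = "\<lambda>xs. (?lt xs - (1 - (1 - ?ne xs))) + (?gt xs - (1 - ?ne xs))"
  have "comp_in X 2 ?F"
    by (intro ci_plus ci_minus ci_one ci_or ci_proj) simp_all
  then have "comp_in X 2 (\<lambda>xs. if TT X (xs ! 0) (xs ! 1) then 1 else 0)"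
    by (rule ci_cong) (auto simp: TT_def)
  then obtain f where "recfn X 2 f" "\<forall>xs. length xs = 2 \<longrightarrow> f xs = (if TT X (xs ! 0) (xs ! 1) then 1 else 0)"
    unfolding comp_in_def by blast
  then show ?thesis unfolding rel_computable_in_def by (intro exI[of _ f]) auto
qed

theorem mainTheorem10:
  fixes X :: "nat set"
  shows "\<exists>T. tournament_on UNIV T \<and> rel_computable_in X T \<and>
           (\<forall>U. infinite U \<and> transitive_on T U \<longrightarrow> U \<subseteq>\<^sup>* X \<or> U \<subseteq>\<^sup>* (- X))"
proof (intro exI[of _ "TT X"] conjI allI impI TT_comp)
  show "tournament_on UNIV (TT X)"
    unfolding tournament_on_def TT_def by auto
next
  fix U assume U: "infinite U \<and> transitive_on (TT X) U"
  show "U \<subseteq>\<^sup>* X \<or> U \<subseteq>\<^sup>* (- X)"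
  proof (rule ccontr)
    assume "\<not> ?thesis"
    then have i1: "infinite (U \<inter> X)" and i2: "infinite (U - X)"
      unfolding almost_subset_def by (auto simp: Diff_eq)
    obtain a where a: "a \<in> U" "a \<in> X" using i1 by (metis Int_iff finite.emptyI equals0I)
    obtain b where b: "b > a" "b \<in> U" "b \<notin> X" using i2 using inf_big by blast
    obtain c where c: "c > b" "c \<in> U" "c \<in> X" using i1 using inf_big by blast
    have "TT X a c" "TT X c b" using a b c unfolding TT_def by auto
    then have "TT X a b" using U a b c unfolding transitive_on_def by blast
    then show False using a b unfolding TT_def by auto
  qed
qed

end
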